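(* For every positive integer $k$ there exists a scoring rule $f$ (assigning to each item $i$ of an instance a score $f(i,\mathcal{A}_n)\ge 0$, not required to depend on the approval profile) such that the price of justified representation $P(k,f)=\sup_{\mathcal{I}_{m,\mathcal{A}_n,k}} P(\mathcal{I}_{m,\mathcal{A}_n,k},f)$ is unbounded (i.e. equals $+\infty$).
   Context: An instance $\mathcal{I}_{m,\mathcal{A}_n,k}=\langle m,\mathcal{A}_n,k\rangle$ consists of a set of items (comments) $[m]=\{1,\dots,m\}$, a set of users $[n]$, an approval profile $\mathcal{A}_n=(A_1,\dots,A_n)$ with $A_u\subseteq[m]$ the set of items approved by user $u$, and a target size $k\le m$. A scoring rule assigns each item $i$ a score $f(i,\mathcal{A}_n)\ge 0$; scores of sets are additive: $f(S)=\sum_{i\in S}f(i,\mathcal{A}_n)$. A group of users $G\subseteq[n]$ is cohesive if $\bigcap_{u\in G}A_u\neq\emptyset$. A set $S\subseteq[m]$ represents $G$ if some $u\in G$ has $A_u\cap S\neq\emptyset$. A set $S$ satisfies justified representation (JR) if $|S|=k$ and $S$ represents every cohesive group of at least $n/k$ users. Let $S^*$ be a set maximizing $f(S)$ over all $S\subseteq[m]$ with $|S|=k$, and $S^*_{JR}$ a set maximizing $f(S)$ over all sets satisfying JR. The price of JR on an instance is $P(\mathcal{I}_{m,\mathcal{A}_n,k},f)=f(S^* )/f(S^*_{JR})$, and $P(k,f)=\max_{\mathcal{I}_{m,\mathcal{A}_n,k}}P(\mathcal{I}_{m,\mathcal{A}_n,k},f)$ over all instances with set size $k$. *)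

theory Defs
  imports "HOL-Library.Extended_Real"
begin

text \<open>An approval profile is a list \<open>A\<close> of length n; user u (0 \<le> u < n) approves
  the set \<open>A ! u\<close>.\<close>

type_synonym profile = "nat set list"
type_synonym scoring_rule = "nat \<Rightarrow> profile \<Rightarrow> real"

definition users :: "profile \<Rightarrow> nat set" where
  "users A = {0..<length A}"

definition valid_instance :: "nat \<Rightarrow> profile \<Rightarrow> nat \<Rightarrow> bool" where
  "valid_instance m A k \<longleftrightarrow> length A \<ge> 1 \<and> k \<le> m \<and> (\<forall>u<length A. A ! u \<subseteq> {1..m})"

definition set_score :: "scoring_rule \<Rightarrow> profile \<Rightarrow> nat set \<Rightarrow> real" where
  "set_score f A S = (\<Sum>i\<in>S. f i A)"

definition cohesive :: "profile \<Rightarrow> nat set \<Rightarrow> bool" where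
  "cohesive A G \<longleftrightarrow> (\<Inter>u\<in>G. A ! u) \<noteq> {}"

definition represents :: "profile \<Rightarrow> nat set \<Rightarrow> nat set \<Rightarrow> bool" where
  "represents A S G \<longleftrightarrow> (\<exists>u\<in>G. A ! u \<inter> S \<noteq> {})"

definition satisfies_JR :: "nat \<Rightarrow> profile \<Rightarrow> nat \<Rightarrow> nat set \<Rightarrow> bool" where
  "satisfies_JR m A k S \<longleftrightarrow> S \<subseteq> {1..m} \<and> card S = k \<and>
     (\<forall>G. G \<subseteq> users A \<and> G \<noteq> {} \<and> cohesive A G \<and> real (card G) \<ge> real (length A) / real k
          \<longrightarrow> represents A S G)"

definition opt_score :: "scoring_rule \<Rightarrow> nat \<Rightarrow> profile \<Rightarrow> nat \<Rightarrow> real" where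
  "opt_score f m A k = Max (set_score f A ` {S. S \<subseteq> {1..m} \<and> card S = k})"

definition opt_JR_score :: "scoring_rule \<Rightarrow> nat \<Rightarrow> profile \<Rightarrow> nat \<Rightarrow> real" where
  "opt_JR_score f m A k = Max (set_score f A ` {S. satisfies_JR m A k S})"

text \<open>Price of JR on an instance, as an extended real: x/0 = \<infinity> for x > 0.\<close>
definition price_inst :: "nat \<Rightarrow> profile \<Rightarrow> nat \<Rightarrow> scoring_rule \<Rightarrow> ereal" where
  "price_inst m A k f = ereal (opt_score f m A k) / ereal (opt_JR_score f m A k)"

definition price :: "nat \<Rightarrow> scoring_rule \<Rightarrow> ereal" where
  "price k f = (SUP (m, A) \<in> {(m, A). valid_instance m A k}. price_inst m A k f)"

end

theory Submission
  imports Defs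
begin

theorem proposition1:
  fixes k :: nat
  assumes "k \<ge> 1"
  shows "\<exists>f :: scoring_rule. (\<forall>i A. f i A \<ge> 0) \<and> price k f = \<infinity>"
proof -
  define f :: scoring_rule where "f = (\<lambda>i A. if i = k + 1 then 1 else 0)"
  define A :: profile where "A = map (\<lambda>u. {u+1}) [0..<k]"
  define m where "m = k + 1"
  have lenA: "length A = k" by (simp add: A_def)
  have Au: "\<And>u. u < k \<Longrightarrow> A ! u = {u+1}" by (simp add: A_def)
  have valid: "valid_instance m A k"
    using assms by (auto simp: valid_instance_def lenA Au m_def)
  have JR1: "satisfies_JR m A k {1..k}"
    unfolding satisfies_JR_def
  proof (intro conjI allI impI)
    fix G assume G: "G \<subseteq> users A \<and> G \<noteq> {} \<and> cohesive A G \<and> real (length A) / real k \<le> real (card G)"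
    then obtain u where u: "u \<in> G" by blast
    with G have "u < k" by (auto simp: users_def lenA)
    hence "A ! u \<inter> {1..k} \<noteq> {}" by (simp add: Au)
    then show "represents A {1..k} G" using u unfolding represents_def by blast
  qed (auto simp: m_def)
  have JRall: "S = {1..k}" if S: "satisfies_JR m A k S" for S
  proof -
    have sub: "{1..k} \<subseteq> S"
    proof
      fix x assume x: "x \<in> {1..k}"
      define u where "u = x - 1"
      have uk: "u < k" and xu: "x = u + 1" using x by (auto simp: u_def)
      have "represents A S {u}"
        using S uk assms unfolding satisfies_JR_def
        by (auto simp: users_def lenA cohesive_def Au)
      then show "x \<in> S" using uk xu by (auto simp: represents_def Au)
    qed
    have "finite S" using S by (auto simp: satisfies_JR_def intro: finite_subset)
    moreover have "card S = card {1..k}" using S by (simp add: satisfies_JR_def)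
    ultimately show ?thesis using sub by (metis card_subset_eq finite_atLeastAtMost)
  qed
  have sc0: "set_score f A {1..k} = 0" by (simp add: set_score_def f_def)
  have "{S. satisfies_JR m A k S} = {{1..k}}" using JR1 JRall by blast
  hence jr0: "opt_JR_score f m A k = 0" unfolding opt_JR_score_def by (simp only: image_insert image_empty Max_singleton sc0)
  have S2: "{2..k+1} \<in> {S. S \<subseteq> {1..m} \<and> card S = k}" by (auto simp: m_def)
  have sc1: "set_score f A {2..k+1} = 1"
  proof -
    have "set_score f A {2..k+1} = (\<Sum>i\<in>{2..k+1}. if i = k+1 then 1 else 0)"
      by (simp add: set_score_def f_def)
    also have "\<dots> = 1" using assms by (subst sum.delta) auto
    finally show ?thesis .
  qed
  have fin: "finite {S. S \<subseteq> {1..m} \<and> card S = k}" by (rule finite_subset[of _ "Pow {1..m}"]) auto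
  have "1 \<le> opt_score f m A k"
  proof -
    have mem: "set_score f A {2..k+1} \<in> set_score f A ` {S. S \<subseteq> {1..m} \<and> card S = k}"
      using S2 by (rule imageI)
    have "set_score f A {2..k+1} \<le> Max (set_score f A ` {S. S \<subseteq> {1..m} \<and> card S = k})"
      by (rule Max_ge[OF finite_imageI[OF fin] mem])
    then show ?thesis unfolding opt_score_def using sc1 by simp
  qed
  hence pi: "price_inst m A k f = \<infinity>"
    by (simp add: price_inst_def jr0 divide_ereal_def)
  have "price_inst m A k f \<le> price k f"
  proof -
    have "(m, A) \<in> {(m, A). valid_instance m A k}" using valid by simp
    then have "(\<lambda>(m, A). price_inst m A k f) (m, A) \<le> (SUP x \<in> {(m, A). valid_instance m A k}. (\<lambda>(m, A). price_inst m A k f) x)"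
      by (rule SUP_upper)
    then show ?thesis unfolding price_def by simp
  qed
  hence "price k f = \<infinity>" using pi by simp
  moreover have "\<forall>i A. f i A \<ge> 0" by (simp add: f_def)
  ultimately show ?thesis by blast
qed

end
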